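(* Let $(\Gamma,\mathcal{G}_\Gamma)$ and $(\Sigma,\mathcal{G}_\Sigma)$ be labeled graphs whose vertex groups are all directly-indecomposable cyclic groups, and let $\phi:W(\Gamma)\to W(\Sigma)$ be a group isomorphism. Then the map $V_{\Gamma_A}\to W(\Sigma_A)$, $v\mapsto\rho_{\Sigma_A}(\phi(v))$, extends to a group isomorphism $W(\Gamma_A)\to W(\Sigma_A)$.
   Context: A labeled graph $(\Lambda,\mathcal{G}_\Lambda)$ consists of a nonempty finite simplicial graph $\Lambda$ with vertex set $V_\Lambda$ and a family $\mathcal{G}_\Lambda=\{G_v\}_{v\in V_\Lambda}$ of nontrivial groups. Its graph product $W(\Lambda)$ is the quotient of the free product $\ast_{v}G_v$ by the relations $gh=hg$ for $g\in G_v$, $h\in G_{v'}$ with $v,v'$ adjacent. For a full subgraph $\Theta$, $W(\Theta)$ denotes the subgroup generated by the images of $G_v$, $v\in V_\Theta$ (isomorphic to the graph product of the labeled subgraph). A cyclic group is directly-indecomposable if it is infinite or has prime-power order. For cyclic vertex groups, a generator of each $G_v$ is fixed and also denoted $v$. $\Lambda_T$ (resp. $\Lambda_A$) is the full subgraph of $\Lambda$ spanned by the vertices $v$ with $G_v$ finite (resp. infinite). $\rho_{\Sigma_A}:W(\Sigma)\to W(\Sigma_A)$ is the retraction homomorphism sending each $v\in V_{\Sigma_A}$ to $v$ and each $v\in V_{\Sigma_T}$ to $1$. *)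

theory Defs
  imports "HOL-Algebra.Group" "HOL-Computational_Algebra.Primes"
begin

text \<open>A labeled graph with directly-indecomposable cyclic vertex groups is encoded by a
vertex set V, a symmetric irreflexive adjacency relation E, and an order function
n: the vertex group of v is the cyclic group Z/(n v) (n v = 0 meaning Z), with
fixed generator the class of 1. Directly-indecomposable and nontrivial means
n v = 0 or n v = p^k with p prime and k >= 1.\<close>

type_synonym 'v gword = "('v \<times> int) list"

definition gp_words :: "'v set \<Rightarrow> 'v gword set" where
  "gp_words V = {w. set (map fst w) \<subseteq> V}"

definition dindec_cyclic_order :: "nat \<Rightarrow> bool" where
  "dindec_cyclic_order m \<longleftrightarrow> m = 0 \<or> (\<exists>p k. prime p \<and> k \<ge> 1 \<and> m = p ^ k)"

definition labeled_cyclic_graph :: "'v set \<Rightarrow> ('v \<Rightarrow> 'v \<Rightarrow> bool) \<Rightarrow> ('v \<Rightarrow> nat) \<Rightarrow> bool" where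
  "labeled_cyclic_graph V E n \<longleftrightarrow>
     finite V \<and> V \<noteq> {} \<and>
     (\<forall>v w. E v w \<longrightarrow> v \<in> V \<and> w \<in> V) \<and>
     (\<forall>v w. E v w \<longrightarrow> E w v) \<and> (\<forall>v. \<not> E v v) \<and>
     (\<forall>v\<in>V. dindec_cyclic_order (n v))"

text \<open>The congruence on words (letters (v,a) standing for the element a of Z/(n v))
defining the graph product.\<close>

inductive gp_rel :: "'v set \<Rightarrow> ('v \<Rightarrow> 'v \<Rightarrow> bool) \<Rightarrow> ('v \<Rightarrow> nat) \<Rightarrow> 'v gword \<Rightarrow> 'v gword \<Rightarrow> bool"
  for V E n where
  gp_refl: "w \<in> gp_words V \<Longrightarrow> gp_rel V E n w w"
| gp_sym: "gp_rel V E n x y \<Longrightarrow> gp_rel V E n y x"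
| gp_trans: "gp_rel V E n x y \<Longrightarrow> gp_rel V E n y z \<Longrightarrow> gp_rel V E n x z"
| gp_mult: "\<lbrakk>v \<in> V; p \<in> gp_words V; s \<in> gp_words V\<rbrakk> \<Longrightarrow>
      gp_rel V E n (p @ [(v,a),(v,b)] @ s) (p @ [(v,a+b)] @ s)"
| gp_zero: "\<lbrakk>v \<in> V; p \<in> gp_words V; s \<in> gp_words V; int (n v) dvd a\<rbrakk> \<Longrightarrow>
      gp_rel V E n (p @ [(v,a)] @ s) (p @ s)"
| gp_comm: "\<lbrakk>v \<in> V; w \<in> V; E v w; p \<in> gp_words V; s \<in> gp_words V\<rbrakk> \<Longrightarrow>
      gp_rel V E n (p @ [(v,a),(w,b)] @ s) (p @ [(w,b),(v,a)] @ s)"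

definition gp_class :: "'v set \<Rightarrow> ('v \<Rightarrow> 'v \<Rightarrow> bool) \<Rightarrow> ('v \<Rightarrow> nat) \<Rightarrow> 'v gword \<Rightarrow> 'v gword set" where
  "gp_class V E n w = {z. gp_rel V E n w z}"

definition graph_product :: "'v set \<Rightarrow> ('v \<Rightarrow> 'v \<Rightarrow> bool) \<Rightarrow> ('v \<Rightarrow> nat) \<Rightarrow> 'v gword set monoid" where
  "graph_product V E n =
     \<lparr> partial_object.carrier = gp_class V E n ` gp_words V,
       monoid.mult = (\<lambda>X Y. \<Union>x\<in>X. \<Union>y\<in>Y. gp_class V E n (x @ y)),
       monoid.one = gp_class V E n [] \<rparr>"

definition gp_gen :: "'v set \<Rightarrow> ('v \<Rightarrow> 'v \<Rightarrow> bool) \<Rightarrow> ('v \<Rightarrow> nat) \<Rightarrow> 'v \<Rightarrow> 'v gword set" where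
  "gp_gen V E n v = gp_class V E n [(v, 1)]"

text \<open>Vertices with infinite vertex group (the subgraph Lambda_A is the full subgraph on these).\<close>
definition inf_vertices :: "'v set \<Rightarrow> ('v \<Rightarrow> nat) \<Rightarrow> 'v set" where
  "inf_vertices V n = {v \<in> V. n v = 0}"

definition retr_A :: "'v set \<Rightarrow> ('v \<Rightarrow> 'v \<Rightarrow> bool) \<Rightarrow> ('v \<Rightarrow> nat) \<Rightarrow> 'v gword set \<Rightarrow> 'v gword set" where
  "retr_A V E n X = (\<Union>x\<in>X. gp_class (inf_vertices V n) E n (filter (\<lambda>l. n (fst l) = 0) x))"

end

theory Submission
  imports Defs
begin


lemma gp_words_Nil[simp]: "[] \<in> gp_words V" by (simp add: gp_words_def)
lemma gp_words_Cons[simp]: "(l # w \<in> gp_words V) = (fst l \<in> V \<and> w \<in> gp_words V)"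
  by (auto simp: gp_words_def)
lemma gp_words_append[simp]: "(x @ y \<in> gp_words V) = (x \<in> gp_words V \<and> y \<in> gp_words V)"
  by (auto simp: gp_words_def)

lemma gp_rel_words: "gp_rel V E n x y \<Longrightarrow> x \<in> gp_words V \<and> y \<in> gp_words V"
  by (induction rule: gp_rel.induct) auto

lemma gp_rel_app:
  assumes "gp_rel V E n x y" "p \<in> gp_words V" "s \<in> gp_words V"
  shows "gp_rel V E n (p @ x @ s) (p @ y @ s)"
  using assms
proof (induction arbitrary: p s rule: gp_rel.induct)
  case (gp_refl w) then show ?case by (intro gp_rel.gp_refl) auto
next
  case (gp_sym x y) then show ?case by (blast intro: gp_rel.gp_sym)
next
  case (gp_trans x y z) then show ?case by (blast intro: gp_rel.gp_trans)
next
  case (gp_mult v p' s' a b)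
  from gp_rel.gp_mult[of v V "p @ p'" "s' @ s" E n a b] gp_mult show ?case by simp
next
  case (gp_zero v p' s' a)
  from gp_rel.gp_zero[of v V "p @ p'" "s' @ s" n a E] gp_zero show ?case by simp
next
  case (gp_comm v w p' s' a b)
  from gp_rel.gp_comm[of v V w E "p @ p'" "s' @ s" n a b] gp_comm show ?case by simp
qed

lemma gp_rel_app2:
  assumes "gp_rel V E n x x'" "gp_rel V E n y y'"
  shows "gp_rel V E n (x @ y) (x' @ y')"
proof -
  have w: "x \<in> gp_words V" "x' \<in> gp_words V" "y \<in> gp_words V" "y' \<in> gp_words V"
    using assms gp_rel_words by blast+
  have "gp_rel V E n ([] @ x @ y) ([] @ x' @ y)" by (rule gp_rel_app) (use assms w in auto)
  moreover have "gp_rel V E n (x' @ y @ []) (x' @ y' @ [])" by (rule gp_rel_app) (use assms w in auto)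
  ultimately show ?thesis by (auto intro: gp_rel.gp_trans)
qed

lemma gp_class_eq: "gp_rel V E n x y \<Longrightarrow> gp_class V E n x = gp_class V E n y"
  unfolding gp_class_def by (auto intro: gp_rel.gp_trans gp_rel.gp_sym)

lemma gp_class_eq_iff: "x \<in> gp_words V \<Longrightarrow> gp_class V E n x = gp_class V E n y \<longleftrightarrow> gp_rel V E n x y"
  unfolding gp_class_def
  by (metis gp_rel.gp_refl gp_rel.gp_sym gp_rel_words gp_class_def gp_class_eq mem_Collect_eq)

lemma gp_class_self: "x \<in> gp_words V \<Longrightarrow> x \<in> gp_class V E n x"
  by (simp add: gp_class_def gp_rel.gp_refl)

lemma gp_class_mem: "y \<in> gp_class V E n x \<Longrightarrow> gp_class V E n y = gp_class V E n x"
  unfolding gp_class_def by (auto intro: gp_rel.gp_trans gp_rel.gp_sym)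

lemma gp_carrier: "carrier (graph_product V E n) = gp_class V E n ` gp_words V"
  by (simp add: graph_product_def)
lemma gp_one: "one (graph_product V E n) = gp_class V E n []"
  by (simp add: graph_product_def)

lemma gp_mult_class:
  assumes "x \<in> gp_words V" "y \<in> gp_words V"
  shows "gp_class V E n x \<otimes>\<^bsub>graph_product V E n\<^esub> gp_class V E n y = gp_class V E n (x @ y)"
proof -
  have "(\<Union>a\<in>gp_class V E n x. \<Union>b\<in>gp_class V E n y. gp_class V E n (a @ b)) = gp_class V E n (x @ y)"
  proof (intro equalityI subsetI)
    fix z assume "z \<in> (\<Union>a\<in>gp_class V E n x. \<Union>b\<in>gp_class V E n y. gp_class V E n (a @ b))"
    then obtain a b where ab: "gp_rel V E n x a" "gp_rel V E n y b" "z \<in> gp_class V E n (a @ b)"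
      by (auto simp: gp_class_def)
    have "gp_class V E n (a @ b) = gp_class V E n (x @ y)"
      by (rule gp_class_eq, rule gp_rel.gp_sym, rule gp_rel_app2) (use ab in auto)
    with ab show "z \<in> gp_class V E n (x @ y)" by simp
  next
    fix z assume "z \<in> gp_class V E n (x @ y)"
    then show "z \<in> (\<Union>a\<in>gp_class V E n x. \<Union>b\<in>gp_class V E n y. gp_class V E n (a @ b))"
      using assms by (auto intro!: bexI gp_class_self)
  qed
  then show ?thesis by (simp add: graph_product_def)
qed

definition invw :: "'v gword \<Rightarrow> 'v gword" where
  "invw w = rev (map (\<lambda>(u,a). (u, -a)) w)"

lemma invw_words[simp]: "(invw w \<in> gp_words V) = (w \<in> gp_words V)"
  by (induction w) (auto simp: invw_def)

lemma invw_Cons: "invw (l # w) = invw w @ [(fst l, - snd l)]"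
  by (cases l) (simp add: invw_def)

lemma gp_rel_letter_inv: "u \<in> V \<Longrightarrow> gp_rel V E n [(u, -a), (u, a)] []"
proof -
  assume u: "u \<in> V"
  have "gp_rel V E n ([] @ [(u, -a), (u, a)] @ []) ([] @ [(u, -a + a)] @ [])"
    by (rule gp_rel.gp_mult) (use u in auto)
  moreover have "gp_rel V E n ([] @ [(u, 0)] @ []) ([] @ [])"
    by (rule gp_rel.gp_zero) (use u in auto)
  ultimately show ?thesis by (auto intro: gp_rel.gp_trans)
qed

lemma gp_rel_invw: "w \<in> gp_words V \<Longrightarrow> gp_rel V E n (invw w @ w) []"
proof (induction w)
  case Nil then show ?case by (simp add: invw_def gp_rel.gp_refl)
next
  case (Cons l w)
  obtain u a where l: "l = (u, a)" by (cases l)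
  have uV: "u \<in> V" "w \<in> gp_words V" using Cons.prems l by auto
  have "invw (l # w) @ l # w = invw w @ [(u, -a), (u, a)] @ w" by (simp add: invw_Cons l)
  moreover have "gp_rel V E n (invw w @ [(u, -a), (u, a)] @ w) (invw w @ [] @ w)"
    by (rule gp_rel_app) (use gp_rel_letter_inv uV in auto)
  ultimately show ?case using Cons.IH uV by (auto intro: gp_rel.gp_trans)
qed

lemma gp_group: "group (graph_product V E n)"
proof (rule groupI)
  let ?G = "graph_product V E n"
  show "one ?G \<in> carrier ?G" by (auto simp: gp_carrier gp_one)
  fix x y z assume xyz: "x \<in> carrier ?G" "y \<in> carrier ?G" "z \<in> carrier ?G"
  then obtain a b c where abc: "a \<in> gp_words V" "b \<in> gp_words V" "c \<in> gp_words V"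
    "x = gp_class V E n a" "y = gp_class V E n b" "z = gp_class V E n c"
    by (auto simp: gp_carrier)
  show "x \<otimes>\<^bsub>?G\<^esub> y \<in> carrier ?G" using abc by (simp add: gp_mult_class gp_carrier)
  show "x \<otimes>\<^bsub>?G\<^esub> y \<otimes>\<^bsub>?G\<^esub> z = x \<otimes>\<^bsub>?G\<^esub> (y \<otimes>\<^bsub>?G\<^esub> z)" using abc by (simp add: gp_mult_class)
  show "one ?G \<otimes>\<^bsub>?G\<^esub> x = x" using abc
    by (metis append_Nil gp_mult_class gp_one gp_words_Nil)
  show "\<exists>y\<in>carrier ?G. y \<otimes>\<^bsub>?G\<^esub> x = one ?G"
    using abc by (intro bexI[of _ "gp_class V E n (invw a)"])
      (simp_all add: gp_carrier gp_one gp_mult_class gp_class_eq gp_rel_invw)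
qed



definition ghom :: "'v set \<Rightarrow> ('v \<Rightarrow> 'v \<Rightarrow> bool) \<Rightarrow> ('v \<Rightarrow> nat) \<Rightarrow> ('v gword \<Rightarrow> 'v gword) \<Rightarrow> 'v gword set \<Rightarrow> 'v gword set" where
  "ghom V2 E n f X = (\<Union>x\<in>X. gp_class V2 E n (f x))"

lemma ghom_class:
  assumes resp: "\<And>x y. gp_rel V1 E n x y \<Longrightarrow> gp_rel V2 E n (f x) (f y)"
    and x: "x \<in> gp_words V1"
  shows "ghom V2 E n f (gp_class V1 E n x) = gp_class V2 E n (f x)"
proof (intro equalityI subsetI)
  fix z assume "z \<in> ghom V2 E n f (gp_class V1 E n x)"
  then obtain y where y: "gp_rel V1 E n x y" "z \<in> gp_class V2 E n (f y)"
    by (auto simp: ghom_def gp_class_def)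
  then show "z \<in> gp_class V2 E n (f x)" using gp_class_eq[OF resp[OF y(1)]] by simp
next
  fix z assume "z \<in> gp_class V2 E n (f x)"
  then show "z \<in> ghom V2 E n f (gp_class V1 E n x)"
    unfolding ghom_def using gp_class_self[OF x] by blast
qed

lemma ghom_hom:
  assumes resp: "\<And>x y. gp_rel V1 E n x y \<Longrightarrow> gp_rel V2 E n (f x) (f y)"
    and app: "\<And>x y. f (x @ y) = f x @ f y"
  shows "ghom V2 E n f \<in> hom (graph_product V1 E n) (graph_product V2 E n)"
proof -
  have fw: "f x \<in> gp_words V2" if "x \<in> gp_words V1" for x
    using gp_rel_words[OF resp[OF gp_rel.gp_refl[OF that]]] by simp
  show ?thesis
    unfolding hom_def
    by (auto simp: gp_carrier ghom_class[OF resp] gp_mult_class app fw)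
qed

lemma gp_rel_mono: "gp_rel V1 E n x y \<Longrightarrow> V1 \<subseteq> V2 \<Longrightarrow> gp_rel V2 E n x y"
proof (induction rule: gp_rel.induct)
  case (gp_refl w) then show ?case by (intro gp_rel.gp_refl) (auto simp: gp_words_def)
next
  case (gp_sym x y) then show ?case by (blast intro: gp_rel.gp_sym)
next
  case (gp_trans x y z) then show ?case by (blast intro: gp_rel.gp_trans)
next
  case (gp_mult v p s a b) then show ?case by (intro gp_rel.gp_mult) (auto simp: gp_words_def)
next
  case (gp_zero v p s a) then show ?case by (intro gp_rel.gp_zero) (auto simp: gp_words_def)
next
  case (gp_comm v w p s a b) then show ?case by (intro gp_rel.gp_comm) (auto simp: gp_words_def)
qed

lemma filter_words: "x \<in> gp_words V1 \<Longrightarrow> (\<forall>u\<in>V1. P u \<longrightarrow> u \<in> V2) \<Longrightarrow>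
   filter (\<lambda>l. P (fst l)) x \<in> gp_words V2"
  by (auto simp: gp_words_def)

lemma gp_rel_filter: "gp_rel V1 E n x y \<Longrightarrow> (\<forall>u\<in>V1. P u \<longrightarrow> u \<in> V2) \<Longrightarrow>
   gp_rel V2 E n (filter (\<lambda>l. P (fst l)) x) (filter (\<lambda>l. P (fst l)) y)"
proof (induction rule: gp_rel.induct)
  case (gp_refl w) then show ?case by (intro gp_rel.gp_refl filter_words)
next
  case (gp_sym x y) then show ?case by (blast intro: gp_rel.gp_sym)
next
  case (gp_trans x y z) then show ?case by (blast intro: gp_rel.gp_trans)
next
  case (gp_mult v p s a b) then show ?case
    using gp_rel.gp_mult[of v V2 "filter (\<lambda>l. P (fst l)) p" "filter (\<lambda>l. P (fst l)) s" E n a b]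
    by (cases "P v") (auto intro!: gp_rel.gp_refl filter_words)
next
  case (gp_zero v p s a) then show ?case
    using gp_rel.gp_zero[of v V2 "filter (\<lambda>l. P (fst l)) p" "filter (\<lambda>l. P (fst l)) s" n a E]
    by (cases "P v") (auto intro!: gp_rel.gp_refl filter_words)
next
  case (gp_comm v w p s a b) then show ?case
    using gp_rel.gp_comm[of v V2 w E "filter (\<lambda>l. P (fst l)) p" "filter (\<lambda>l. P (fst l)) s" n a b]
    by (cases "P v"; cases "P w") (auto intro!: gp_rel.gp_refl filter_words)
qed

lemma class_letter_succ:
  assumes "u \<in> V"
  shows "gp_class V E n [(u, a + 1)] = gp_gen V E n u \<otimes>\<^bsub>graph_product V E n\<^esub> gp_class V E n [(u, a)]"
proof -
  have "gp_rel V E n ([] @ [(u, 1), (u, a)] @ []) ([] @ [(u, 1 + a)] @ [])"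
    by (rule gp_rel.gp_mult) (use assms in auto)
  then show ?thesis using assms
    by (simp add: gp_gen_def gp_mult_class gp_class_eq add.commute)
qed

lemma class_letter_zero:
  assumes "u \<in> V" "int (n u) dvd a"
  shows "gp_class V E n [(u, a)] = one (graph_product V E n)"
proof -
  have "gp_rel V E n ([] @ [(u, a)] @ []) ([] @ [])"
    by (rule gp_rel.gp_zero) (use assms in auto)
  then show ?thesis by (simp add: gp_one gp_class_eq)
qed

lemma class_letter_pow:
  assumes "u \<in> V"
  shows "gp_class V E n [(u, int k)] = gp_gen V E n u [^]\<^bsub>graph_product V E n\<^esub> k"
proof (induction k)
  case 0 then show ?case using class_letter_zero[OF assms] by simp
next
  case (Suc k)
  interpret group "graph_product V E n" by (rule gp_group)
  have g: "gp_gen V E n u \<in> carrier (graph_product V E n)"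
    using assms by (auto simp: gp_gen_def gp_carrier)
  have "gp_class V E n [(u, int (Suc k))] = gp_gen V E n u \<otimes>\<^bsub>graph_product V E n\<^esub> gp_class V E n [(u, int k)]"
    using class_letter_succ[OF assms, of E n "int k"] by (simp add: add.commute)
  then show ?case using Suc g by (metis nat_pow_Suc2)
qed

lemma gen_torsion:
  assumes "u \<in> V"
  shows "gp_gen V E n u [^]\<^bsub>graph_product V E n\<^esub> (n u) = one (graph_product V E n)"
  using class_letter_pow[OF assms, of E n "n u"] class_letter_zero[OF assms, of n "int (n u)" E] by simp

lemma hom_gen_eq:
  assumes h1: "h1 \<in> hom (graph_product V E n) H" and h2: "h2 \<in> hom (graph_product V E n) H"
    and H: "group H"
    and gens: "\<And>u. u \<in> V \<Longrightarrow> h1 (gp_gen V E n u) = h2 (gp_gen V E n u)"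
    and x: "x \<in> carrier (graph_product V E n)"
  shows "h1 x = h2 x"
proof -
  let ?G = "graph_product V E n"
  interpret G: group ?G by (rule gp_group)
  interpret g1: group_hom ?G H h1 using h1 H by (simp add: group_hom_def group_hom_axioms_def G.is_group)
  interpret g2: group_hom ?G H h2 using h2 H by (simp add: group_hom_def group_hom_axioms_def G.is_group)
  have letter: "h1 (gp_class V E n [(u, a)]) = h2 (gp_class V E n [(u, a)])" if u: "u \<in> V" for u a
  proof -
    have gc: "gp_gen V E n u \<in> carrier ?G" using u by (auto simp: gp_gen_def gp_carrier)
    have lc: "gp_class V E n [(u, b)] \<in> carrier ?G" for b using u by (auto simp: gp_carrier)
    show ?thesis
    proof (induction a rule: int_induct[where k = 0])
      case base
      then show ?case using class_letter_zero[OF u, of n 0 E] by simp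
    next
      case (step1 i)
      then show ?case using class_letter_succ[OF u, of E n i] gc lc gens[OF u] by simp
    next
      case (step2 i)
      have "gp_class V E n [(u, i)] = gp_gen V E n u \<otimes>\<^bsub>?G\<^esub> gp_class V E n [(u, i - 1)]"
        using class_letter_succ[OF u, of E n "i - 1"] by simp
      then have "gp_class V E n [(u, i - 1)] = inv\<^bsub>?G\<^esub> gp_gen V E n u \<otimes>\<^bsub>?G\<^esub> gp_class V E n [(u, i)]"
        using gc lc by (simp add: G.inv_solve_left)
      then show ?case using step2 gc lc gens[OF u] by simp
    qed
  qed
  obtain w where w: "w \<in> gp_words V" "x = gp_class V E n w" using x by (auto simp: gp_carrier)
  have "h1 (gp_class V E n w) = h2 (gp_class V E n w)" using w(1)
  proof (induction w)
    case Nil then show ?case by (simp flip: gp_one)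
  next
    case (Cons l w)
    obtain u a where l: "l = (u, a)" by (cases l)
    have "gp_class V E n (l # w) = gp_class V E n [(u, a)] \<otimes>\<^bsub>?G\<^esub> gp_class V E n w"
      using Cons.prems l by (simp add: gp_mult_class)
    moreover have "gp_class V E n [(u, a)] \<in> carrier ?G" "gp_class V E n w \<in> carrier ?G"
      using Cons.prems l by (auto simp: gp_carrier)
    ultimately show ?case using Cons letter[of u a] l by simp
  qed
  then show ?thesis using w by simp
qed



definition torsion_free :: "('g, 'm) monoid_scheme \<Rightarrow> bool" where
  "torsion_free H \<longleftrightarrow> (\<forall>x\<in>carrier H. \<forall>k::nat. 0 < k \<longrightarrow> x [^]\<^bsub>H\<^esub> k = \<one>\<^bsub>H\<^esub> \<longrightarrow> x = \<one>\<^bsub>H\<^esub>)"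



type_synonym 'v nf = "'v gword set \<times> (int \<times> 'v gword set) list"

locale hnn =
  fixes V :: "'v set" and E :: "'v \<Rightarrow> 'v \<Rightarrow> bool" and n :: "'v \<Rightarrow> nat" and v :: 'v
  assumes vV: "v \<in> V" and zero: "\<forall>u\<in>V. n u = 0"
    and IH: "torsion_free (graph_product (V - {v}) E n)"
begin

abbreviation "B \<equiv> graph_product (V - {v}) E n"
abbreviation "G \<equiv> graph_product V E n"

sublocale B: group B by (rule gp_group)
sublocale G: group G by (rule gp_group)

definition Lk where "Lk = {w \<in> V - {v}. E v w \<or> E w v}"
definition pi where "pi = ghom (V - {v}) E n (filter (\<lambda>l. fst l \<in> Lk))"
definition rB where "rB b = inv\<^bsub>B\<^esub> (pi b) \<otimes>\<^bsub>B\<^esub> b"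

lemma pi_resp: "gp_rel (V - {v}) E n x y \<Longrightarrow>
   gp_rel (V - {v}) E n (filter (\<lambda>l. fst l \<in> Lk) x) (filter (\<lambda>l. fst l \<in> Lk) y)"
  by (rule gp_rel_filter) auto

lemma pi_hom: "pi \<in> hom B B"
proof -
  have a: "\<And>x y. filter (\<lambda>l. fst l \<in> Lk) (x @ y) = filter (\<lambda>l. fst l \<in> Lk) x @ filter (\<lambda>l. fst l \<in> Lk) y" by simp
  show ?thesis unfolding pi_def using ghom_hom[OF pi_resp a] .
qed

lemma pi_class: "w \<in> gp_words (V - {v}) \<Longrightarrow> pi (gp_class (V - {v}) E n w) = gp_class (V - {v}) E n (filter (\<lambda>l. fst l \<in> Lk) w)"
  unfolding pi_def by (rule ghom_class[OF pi_resp])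

sublocale pih: group_hom B B pi
  by (simp add: group_hom_def group_hom_axioms_def pi_hom B.is_group)

lemma pi_closed[simp]: "b \<in> carrier B \<Longrightarrow> pi b \<in> carrier B"
  using pi_hom by (rule hom_in_carrier)

lemma pi_idem[simp]: "b \<in> carrier B \<Longrightarrow> pi (pi b) = pi b"
proof -
  assume "b \<in> carrier B"
  then obtain w where w: "w \<in> gp_words (V - {v})" "b = gp_class (V - {v}) E n w" by (auto simp: gp_carrier)
  have fw: "filter (\<lambda>l. fst l \<in> Lk) w \<in> gp_words (V - {v})" using w(1) by (auto simp: gp_words_def)
  show ?thesis using w fw by (simp add: pi_class)
qed

lemma rB_closed[simp]: "b \<in> carrier B \<Longrightarrow> rB b \<in> carrier B"
  by (simp add: rB_def)

lemma pi_rB[simp]: "b \<in> carrier B \<Longrightarrow> pi (rB b) = \<one>\<^bsub>B\<^esub>"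
  by (simp add: rB_def)

lemma pi_rB_decomp: "b \<in> carrier B \<Longrightarrow> pi b \<otimes>\<^bsub>B\<^esub> rB b = b"
  by (simp add: rB_def B.m_assoc[symmetric])

lemma rB_one_iff: "b \<in> carrier B \<Longrightarrow> rB b = \<one>\<^bsub>B\<^esub> \<longleftrightarrow> pi b = b"
  unfolding rB_def
  by (metis B.inv_closed B.inv_equality B.l_inv pi_closed B.inv_inv B.inv_solve_left B.one_closed B.r_one)

lemma rB_left: "c \<in> carrier B \<Longrightarrow> pi c = c \<Longrightarrow> b \<in> carrier B \<Longrightarrow> rB (c \<otimes>\<^bsub>B\<^esub> b) = rB b"
  unfolding rB_def by (simp add: B.inv_mult_group B.m_assoc[symmetric]) (simp add: B.m_assoc)

lemma pi_left: "c \<in> carrier B \<Longrightarrow> pi c = c \<Longrightarrow> b \<in> carrier B \<Longrightarrow> pi (c \<otimes>\<^bsub>B\<^esub> b) = c \<otimes>\<^bsub>B\<^esub> pi b"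
  by simp

definition tact :: "int \<Rightarrow> 'v nf \<Rightarrow> 'v nf" where
  "tact e nf = (case nf of (b0, L) \<Rightarrow>
     if e = 0 then (b0, L)
     else if rB b0 \<noteq> \<one>\<^bsub>B\<^esub> then (pi b0, (e, rB b0) # L)
     else (case L of [] \<Rightarrow> (b0, [(e, \<one>\<^bsub>B\<^esub>)])
          | p # L' \<Rightarrow> if e + fst p = 0 then (b0 \<otimes>\<^bsub>B\<^esub> snd p, L') else (b0, (e + fst p, snd p) # L')))"

definition bact :: "'v gword set \<Rightarrow> 'v nf \<Rightarrow> 'v nf" where
  "bact b nf = (b \<otimes>\<^bsub>B\<^esub> fst nf, snd nf)"

definition valid :: "'v nf \<Rightarrow> bool" where
  "valid nf \<longleftrightarrow> fst nf \<in> carrier B \<and>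
     (\<forall>p\<in>set (snd nf). fst p \<noteq> 0 \<and> snd p \<in> carrier B \<and> pi (snd p) = \<one>\<^bsub>B\<^esub>) \<and>
     (\<forall>p\<in>set (butlast (snd nf)). snd p \<noteq> \<one>\<^bsub>B\<^esub>)"

lemma tact_0[simp]: "tact 0 nf = nf"
  by (simp add: tact_def split: prod.splits)

lemma tact_A: "e \<noteq> 0 \<Longrightarrow> rB b0 \<noteq> \<one>\<^bsub>B\<^esub> \<Longrightarrow> tact e (b0, L) = (pi b0, (e, rB b0) # L)"
  by (simp add: tact_def)
lemma tact_B1: "e \<noteq> 0 \<Longrightarrow> rB b0 = \<one>\<^bsub>B\<^esub> \<Longrightarrow> tact e (b0, []) = (b0, [(e, \<one>\<^bsub>B\<^esub>)])"
  by (simp add: tact_def)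
lemma tact_B2: "e \<noteq> 0 \<Longrightarrow> rB b0 = \<one>\<^bsub>B\<^esub> \<Longrightarrow> tact e (b0, (e', r') # L) =
   (if e + e' = 0 then (b0 \<otimes>\<^bsub>B\<^esub> r', L) else (b0, (e + e', r') # L))"
  by (simp add: tact_def)

lemma valid_Cons: "valid (b0, p # L) \<longleftrightarrow> b0 \<in> carrier B \<and> fst p \<noteq> 0 \<and> snd p \<in> carrier B \<and> pi (snd p) = \<one>\<^bsub>B\<^esub>
   \<and> (L \<noteq> [] \<longrightarrow> snd p \<noteq> \<one>\<^bsub>B\<^esub>) \<and> valid (b0, L)"
  by (cases L) (auto simp: valid_def)

lemma valid_Nil: "valid (b0, []) \<longleftrightarrow> b0 \<in> carrier B"
  by (simp add: valid_def)

lemma valid_b0: "valid (b0, L) \<Longrightarrow> b1 \<in> carrier B \<Longrightarrow> valid (b1, L)"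
  by (simp add: valid_def)

lemma tact_valid: "valid nf \<Longrightarrow> valid (tact e nf)"
proof -
  assume vn: "valid nf"
  obtain b0 L where nf: "nf = (b0, L)" by (cases nf)
  have b0: "b0 \<in> carrier B" using vn nf by (simp add: valid_def)
  show ?thesis
  proof (cases "e = 0")
    case True then show ?thesis using vn by simp
  next
    case e: False
    show ?thesis
    proof (cases "rB b0 = \<one>\<^bsub>B\<^esub>")
      case False
      then show ?thesis using vn nf e b0 by (auto simp: tact_A valid_Cons intro: valid_b0)
    next
      case True
      show ?thesis
      proof (cases L)
        case Nil then show ?thesis using nf e True b0 by (simp add: tact_B1 valid_Cons valid_Nil)
      next
        case (Cons p L')
        obtain e' r' where p: "p = (e', r')" by (cases p)
        show ?thesis using vn nf e True b0 Cons p by (auto simp: tact_B2 valid_Cons intro: valid_b0)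
      qed
    qed
  qed
qed

lemma rB_pi: "b \<in> carrier B \<Longrightarrow> rB (pi b) = \<one>\<^bsub>B\<^esub>"
  by (simp add: rB_one_iff)

lemma tact_add: "valid nf \<Longrightarrow> tact a (tact b nf) = tact (a + b) nf"
proof -
  assume vn: "valid nf"
  obtain b0 L where nf: "nf = (b0, L)" by (cases nf)
  have b0: "b0 \<in> carrier B" using vn nf by (simp add: valid_def)
  show ?thesis
  proof (cases "a = 0 \<or> b = 0")
    case True then show ?thesis by auto
  next
    case False
    then have a: "a \<noteq> 0" and b: "b \<noteq> 0" by auto
    show ?thesis
    proof (cases "rB b0 = \<one>\<^bsub>B\<^esub>")
      case False
      have r1: "rB (pi b0) = \<one>\<^bsub>B\<^esub>" using b0 by (rule rB_pi)
      show ?thesis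
      proof (cases "a + b = 0")
        case True
        have "pi b0 \<otimes>\<^bsub>B\<^esub> rB b0 = b0" using b0 by (rule pi_rB_decomp)
        then show ?thesis using True a b False r1 nf by (simp add: tact_A tact_B2)
      next
        case ab: False
        then show ?thesis using a b False r1 nf by (simp add: tact_A tact_B2 add.assoc)
      qed
    next
      case r0: True
      show ?thesis
      proof (cases L)
        case Nil
        then show ?thesis using a b r0 nf b0 by (simp add: tact_B1 tact_B2)
      next
        case (Cons p L')
        obtain e' r' where p: "p = (e', r')" by (cases p)
        have vr: "r' \<in> carrier B" "pi r' = \<one>\<^bsub>B\<^esub>" "e' \<noteq> 0" "L' \<noteq> [] \<longrightarrow> r' \<noteq> \<one>\<^bsub>B\<^esub>"
          using vn nf Cons p by (auto simp: valid_Cons)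
        show ?thesis
        proof (cases "b + e' = 0")
          case False
          then show ?thesis using a b r0 nf Cons p vr
            by (cases "a + b = 0") (auto simp: tact_B2 add.assoc)
        next
          case be: True
          have rr: "rB (b0 \<otimes>\<^bsub>B\<^esub> r') = r'"
          proof -
            have "pi b0 = b0" using r0 b0 rB_one_iff by blast
            then show ?thesis using b0 vr unfolding rB_def
              by (simp add: B.m_assoc[symmetric])
          qed
          have pb: "pi (b0 \<otimes>\<^bsub>B\<^esub> r') = b0" using r0 b0 rB_one_iff vr by simp
          show ?thesis
          proof (cases "r' = \<one>\<^bsub>B\<^esub>")
            case False
            have e1: "a + b + e' = a" using be by simp
            have e2: "a + b = 0 \<Longrightarrow> e' = a" using be by simp
            show ?thesis using a b r0 nf Cons p be rr pb False e1 e2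
              by (cases "a + b = 0") (simp_all add: tact_A tact_B2)
          next
            case True
            then have "L' = []" using vr by auto
            have e1: "a + b + e' = a" using be by simp
            have e2: "a + b = 0 \<Longrightarrow> e' = a" using be by simp
            show ?thesis using a b r0 nf Cons p be True b0 e1 e2 \<open>L' = []\<close>
              by (cases "a + b = 0") (simp_all add: tact_B1 tact_B2)
          qed
        qed
      qed
    qed
  qed
qed

lemma bact_valid: "valid nf \<Longrightarrow> x \<in> carrier B \<Longrightarrow> valid (bact x nf)"
  by (simp add: bact_def valid_def)

lemma bact_mult: "valid nf \<Longrightarrow> x \<in> carrier B \<Longrightarrow> y \<in> carrier B \<Longrightarrow>
    bact x (bact y nf) = bact (x \<otimes>\<^bsub>B\<^esub> y) nf"
  by (simp add: bact_def valid_def B.m_assoc)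

lemma bact_one: "valid nf \<Longrightarrow> bact \<one>\<^bsub>B\<^esub> nf = nf"
  by (simp add: bact_def valid_def)

lemma tact_bact_comm:
  assumes c: "c \<in> carrier B" "pi c = c" and vn: "valid nf"
  shows "tact a (bact c nf) = bact c (tact a nf)"
proof -
  obtain b0 L where nf: "nf = (b0, L)" by (cases nf)
  have b0: "b0 \<in> carrier B" using vn nf by (simp add: valid_def)
  have rr: "rB (c \<otimes>\<^bsub>B\<^esub> b0) = rB b0" using c b0 by (rule rB_left)
  have pp: "pi (c \<otimes>\<^bsub>B\<^esub> b0) = c \<otimes>\<^bsub>B\<^esub> pi b0" using c b0 by simp
  show ?thesis
  proof (cases "a = 0")
    case True then show ?thesis by simp
  next
    case a: False
    show ?thesis
    proof (cases "rB b0 = \<one>\<^bsub>B\<^esub>")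
      case False
      then show ?thesis using a nf rr pp by (simp add: bact_def tact_A)
    next
      case True
      show ?thesis
      proof (cases L)
        case Nil then show ?thesis using a nf rr True by (simp add: bact_def tact_B1)
      next
        case (Cons p L')
        obtain e' r' where p: "p = (e', r')" by (cases p)
        have "r' \<in> carrier B" using vn nf Cons p by (auto simp: valid_Cons)
        then show ?thesis using a nf rr True Cons p c b0 by (simp add: bact_def tact_B2 B.m_assoc)
      qed
    qed
  qed
qed

definition lact :: "'v \<times> int \<Rightarrow> 'v nf \<Rightarrow> 'v nf" where
  "lact l = (if fst l = v then tact (snd l) else bact (gp_class (V - {v}) E n [l]))"

primrec wact :: "'v gword \<Rightarrow> 'v nf \<Rightarrow> 'v nf" where
  "wact [] = id"
| "wact (l # w) = lact l \<circ> wact w"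

lemma wact_append: "wact (x @ y) = wact x \<circ> wact y"
  by (induction x) auto

lemma letterB: "u \<in> V \<Longrightarrow> u \<noteq> v \<Longrightarrow> gp_class (V - {v}) E n [(u, a)] \<in> carrier B"
  by (auto simp: gp_carrier)

lemma lact_valid: "fst l \<in> V \<Longrightarrow> valid nf \<Longrightarrow> valid (lact l nf)"
  using letterB[of "fst l" "snd l"] tact_valid bact_valid
  by (cases l) (simp add: lact_def)

lemma wact_valid: "w \<in> gp_words V \<Longrightarrow> valid nf \<Longrightarrow> valid (wact w nf)"
  by (induction w) (auto intro: lact_valid)

lemma wact_ctx:
  assumes "\<And>nf. valid nf \<Longrightarrow> wact x nf = wact y nf" "s \<in> gp_words V" "valid nf"
  shows "wact (p @ x @ s) nf = wact (p @ y @ s) nf"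
  using assms wact_valid[OF assms(2,3)] by (simp add: wact_append)

lemma classB_mult: "x \<in> gp_words (V - {v}) \<Longrightarrow> y \<in> gp_words (V - {v}) \<Longrightarrow>
  gp_class (V - {v}) E n x \<otimes>\<^bsub>B\<^esub> gp_class (V - {v}) E n y = gp_class (V - {v}) E n (x @ y)"
  by (rule gp_mult_class)

lemma Lk_fix: "u \<in> Lk \<Longrightarrow> pi (gp_class (V - {v}) E n [(u, a)]) = gp_class (V - {v}) E n [(u, a)]"
  by (subst pi_class) (auto simp: Lk_def)

lemma wact_resp: "gp_rel V E n x y \<Longrightarrow> valid nf \<Longrightarrow> wact x nf = wact y nf"
proof (induction arbitrary: nf rule: gp_rel.induct)
  case (gp_refl w) then show ?case by simp
next
  case (gp_sym x y) then show ?case by simp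
next
  case (gp_trans x y z)
  then show ?case by simp
next
  case (gp_mult u p s a b)
  have "wact [(u, a), (u, b)] nf = wact [(u, a + b)] nf" if vn: "valid nf" for nf
  proof (cases "u = v")
    case True then show ?thesis using vn by (simp add: lact_def tact_add)
  next
    case False
    have "gp_class (V - {v}) E n [(u, a)] \<otimes>\<^bsub>B\<^esub> gp_class (V - {v}) E n [(u, b)] =
          gp_class (V - {v}) E n [(u, a + b)]"
    proof -
      have "gp_rel (V - {v}) E n ([] @ [(u, a), (u, b)] @ []) ([] @ [(u, a + b)] @ [])"
        by (rule gp_rel.gp_mult) (use gp_mult False in auto)
      then show ?thesis using gp_mult False by (simp add: classB_mult gp_class_eq)
    qed
    then show ?thesis using vn False gp_mult letterB by (simp add: lact_def bact_mult)
  qed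
  then show ?case using wact_ctx gp_mult by blast
next
  case (gp_zero u p s a)
  have a: "a = 0" using gp_zero zero by auto
  have "wact [(u, a)] nf = wact [] nf" if vn: "valid nf" for nf
  proof (cases "u = v")
    case True then show ?thesis using a by (simp add: lact_def)
  next
    case False
    have "gp_class (V - {v}) E n [(u, a)] = \<one>\<^bsub>B\<^esub>"
      by (rule class_letter_zero) (use gp_zero False a in auto)
    then show ?thesis using vn False by (simp add: lact_def bact_one)
  qed
  then show ?case using wact_ctx[of "[(u, a)]" "[]"] gp_zero by simp
next
  case (gp_comm u w p s a b)
  have "wact [(u, a), (w, b)] nf = wact [(w, b), (u, a)] nf" if vn: "valid nf" for nf
  proof (cases "u = v")
    case True
    show ?thesis
    proof (cases "w = v")
      case True
      then show ?thesis using \<open>u = v\<close> vn by (simp add: lact_def tact_add add.commute)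
    next
      case False
      have "w \<in> Lk" using gp_comm True False by (auto simp: Lk_def)
      then show ?thesis using True False vn gp_comm letterB[of w b]
        by (simp add: lact_def tact_bact_comm Lk_fix)
    qed
  next
    case False
    show ?thesis
    proof (cases "w = v")
      case True
      have "u \<in> Lk" using gp_comm True False by (auto simp: Lk_def)
      then show ?thesis using True False vn gp_comm letterB[of u a]
        by (simp add: lact_def tact_bact_comm Lk_fix)
    next
      case wv: False
      have "gp_class (V - {v}) E n [(u, a)] \<otimes>\<^bsub>B\<^esub> gp_class (V - {v}) E n [(w, b)] =
            gp_class (V - {v}) E n [(w, b)] \<otimes>\<^bsub>B\<^esub> gp_class (V - {v}) E n [(u, a)]"
      proof -
        have "gp_rel (V - {v}) E n ([] @ [(u, a), (w, b)] @ []) ([] @ [(w, b), (u, a)] @ [])"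
          by (rule gp_rel.gp_comm) (use gp_comm False wv in auto)
        then show ?thesis using gp_comm False wv by (simp add: classB_mult gp_class_eq)
      qed
      then show ?thesis using vn False wv gp_comm letterB by (simp add: lact_def bact_mult)
    qed
  qed
  then show ?case using wact_ctx gp_comm by blast
qed

definition Act :: "'v gword set \<Rightarrow> 'v nf \<Rightarrow> 'v nf" where
  "Act X nf = wact (SOME w. w \<in> X) nf"

lemma Act_class: "w \<in> gp_words V \<Longrightarrow> valid nf \<Longrightarrow> Act (gp_class V E n w) nf = wact w nf"
proof -
  assume w: "w \<in> gp_words V" and vn: "valid nf"
  have "(SOME w'. w' \<in> gp_class V E n w) \<in> gp_class V E n w"
    using gp_class_self[OF w] by (rule someI)
  then have "gp_rel V E n w (SOME w'. w' \<in> gp_class V E n w)" by (simp add: gp_class_def)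
  then show ?thesis using wact_resp[OF _ vn] by (simp add: Act_def)
qed

lemma carrierG_E: "X \<in> carrier G \<Longrightarrow> (\<And>w. w \<in> gp_words V \<Longrightarrow> X = gp_class V E n w \<Longrightarrow> P) \<Longrightarrow> P"
  by (auto simp: gp_carrier)

lemma Act_valid: "X \<in> carrier G \<Longrightarrow> valid nf \<Longrightarrow> valid (Act X nf)"
  by (erule carrierG_E) (simp add: Act_class wact_valid)

lemma Act_mult: "X \<in> carrier G \<Longrightarrow> Y \<in> carrier G \<Longrightarrow> valid nf \<Longrightarrow>
    Act (X \<otimes>\<^bsub>G\<^esub> Y) nf = Act X (Act Y nf)"
  apply (erule carrierG_E, erule carrierG_E)
  by (simp add: gp_mult_class Act_class wact_append wact_valid)

lemma Act_one: "valid nf \<Longrightarrow> Act \<one>\<^bsub>G\<^esub> nf = nf"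
  by (simp add: gp_one Act_class)

lemma Act_pow: "X \<in> carrier G \<Longrightarrow> valid nf \<Longrightarrow> Act (X [^]\<^bsub>G\<^esub> (k::nat)) nf = (Act X ^^ k) nf"
proof (induction k)
  case 0 then show ?case by (simp add: Act_one)
next
  case (Suc k)
  have "X [^]\<^bsub>G\<^esub> Suc k = X \<otimes>\<^bsub>G\<^esub> X [^]\<^bsub>G\<^esub> k" using Suc.prems(1) by (rule G.nat_pow_Suc2)
  then show ?case using Suc by (simp add: Act_mult)
qed

definition iota where "iota = ghom V E n id"

lemma iota_resp: "gp_rel (V - {v}) E n x y \<Longrightarrow> gp_rel V E n (id x) (id y)"
  by (auto intro: gp_rel_mono)

lemma iota_hom: "iota \<in> hom B G"
proof -
  have a: "\<And>x y. id (x @ y) = id x @ id y" by simp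
  show ?thesis unfolding iota_def using ghom_hom[OF iota_resp a] .
qed

sublocale ioh: group_hom B G iota
  by (simp add: group_hom_def group_hom_axioms_def iota_hom B.is_group G.is_group)

lemma iota_class: "w \<in> gp_words (V - {v}) \<Longrightarrow> iota (gp_class (V - {v}) E n w) = gp_class V E n w"
  unfolding iota_def using ghom_class[OF iota_resp] by simp

lemma wordsV': "w \<in> gp_words (V - {v}) \<Longrightarrow> w \<in> gp_words V"
  by (auto simp: gp_words_def)

lemma wact_B: "u \<in> gp_words (V - {v}) \<Longrightarrow> valid nf \<Longrightarrow> wact u nf = bact (gp_class (V - {v}) E n u) nf"
proof (induction u arbitrary: nf)
  case Nil then show ?case by (simp add: gp_one[symmetric] bact_one)
next
  case (Cons l u)
  obtain w a where l: "l = (w, a)" by (cases l)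
  have wv: "w \<in> V" "w \<noteq> v" "u \<in> gp_words (V - {v})" using Cons.prems l by auto
  have cu: "gp_class (V - {v}) E n u \<in> carrier B" using wv by (auto simp: gp_carrier)
  have "gp_class (V - {v}) E n (l # u) = gp_class (V - {v}) E n [(w, a)] \<otimes>\<^bsub>B\<^esub> gp_class (V - {v}) E n u"
    using wv l by (simp add: classB_mult)
  then show ?case using Cons wv l cu letterB by (simp add: lact_def bact_mult)
qed

lemma Act_iota: "b \<in> carrier B \<Longrightarrow> valid nf \<Longrightarrow> Act (iota b) nf = bact b nf"
proof -
  assume b: "b \<in> carrier B" and vn: "valid nf"
  then obtain u where u: "u \<in> gp_words (V - {v})" "b = gp_class (V - {v}) E n u" by (auto simp: gp_carrier)
  show ?thesis using u vn by (simp add: iota_class Act_class wordsV' wact_B)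
qed

definition tV where "tV e = gp_class V E n [(v, e)]"

lemma tV_closed[simp]: "tV e \<in> carrier G"
  using vV by (auto simp: tV_def gp_carrier)

lemma Act_tV: "valid nf \<Longrightarrow> Act (tV e) nf = tact e nf"
  using vV by (simp add: tV_def Act_class lact_def)

lemma tV_add: "tV a \<otimes>\<^bsub>G\<^esub> tV b = tV (a + b)"
proof -
  have "gp_rel V E n ([] @ [(v, a), (v, b)] @ []) ([] @ [(v, a + b)] @ [])"
    by (rule gp_rel.gp_mult) (use vV in auto)
  then show ?thesis using vV by (simp add: tV_def gp_mult_class gp_class_eq)
qed

lemma tV_0: "tV 0 = \<one>\<^bsub>G\<^esub>"
  unfolding tV_def by (rule class_letter_zero) (use vV in auto)

lemma Lk_comm_word: "u \<in> gp_words Lk \<Longrightarrow> gp_rel V E n (u @ [(v, e)]) ((v, e) # u)"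
proof (induction u)
  case Nil then show ?case using vV by (auto intro: gp_rel.gp_refl)
next
  case (Cons l u)
  obtain w a where l: "l = (w, a)" by (cases l)
  have w: "w \<in> Lk" "u \<in> gp_words Lk" using Cons.prems l by auto
  have wV: "w \<in> V" "w \<noteq> v" "E v w \<or> E w v" using w by (auto simp: Lk_def)
  have uV: "u \<in> gp_words V" using w(2) by (auto simp: gp_words_def Lk_def)
  have 1: "gp_rel V E n ([(w, a)] @ (u @ [(v, e)]) @ []) ([(w, a)] @ ((v, e) # u) @ [])"
    by (rule gp_rel_app) (use Cons w wV in auto)
  have 2: "gp_rel V E n ([] @ [(w, a), (v, e)] @ u) ([] @ [(v, e), (w, a)] @ u)"
  proof (cases "E w v")
    case True then show ?thesis by (intro gp_rel.gp_comm) (use wV vV uV in auto)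
  next
    case False
    then have "E v w" using wV by auto
    then have "gp_rel V E n ([] @ [(v, e), (w, a)] @ u) ([] @ [(w, a), (v, e)] @ u)"
      by (intro gp_rel.gp_comm) (use wV vV uV in auto)
    then show ?thesis by (rule gp_rel.gp_sym)
  qed
  show ?case using gp_rel.gp_trans[OF 1 ] 2 l by simp
qed

lemma comm_C: "c \<in> carrier B \<Longrightarrow> pi c = c \<Longrightarrow> iota c \<otimes>\<^bsub>G\<^esub> tV e = tV e \<otimes>\<^bsub>G\<^esub> iota c"
proof -
  assume c: "c \<in> carrier B" "pi c = c"
  then obtain w where w: "w \<in> gp_words (V - {v})" "c = gp_class (V - {v}) E n w" by (auto simp: gp_carrier)
  let ?u = "filter (\<lambda>l. fst l \<in> Lk) w"
  have u: "?u \<in> gp_words (V - {v})" "?u \<in> gp_words Lk" "?u \<in> gp_words V"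
    using w(1) by (auto simp: gp_words_def Lk_def)
  have cu: "c = gp_class (V - {v}) E n ?u" using c w by (simp add: pi_class)
  show ?thesis using cu u vV
    by (simp add: iota_class tV_def gp_mult_class gp_class_eq Lk_comm_word)
qed

lemma comm_C': "c \<in> carrier B \<Longrightarrow> pi c = c \<Longrightarrow> X \<in> carrier G \<Longrightarrow>
    iota c \<otimes>\<^bsub>G\<^esub> (tV e \<otimes>\<^bsub>G\<^esub> X) = tV e \<otimes>\<^bsub>G\<^esub> (iota c \<otimes>\<^bsub>G\<^esub> X)"
  by (simp add: G.m_assoc[symmetric] comm_C)

lemma tV_add': "X \<in> carrier G \<Longrightarrow> tV a \<otimes>\<^bsub>G\<^esub> (tV b \<otimes>\<^bsub>G\<^esub> X) = tV (a + b) \<otimes>\<^bsub>G\<^esub> X"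
  by (simp add: G.m_assoc[symmetric] tV_add)

primrec prodL :: "(int \<times> 'v gword set) list \<Rightarrow> 'v gword set" where
  "prodL [] = \<one>\<^bsub>G\<^esub>"
| "prodL (p # L) = tV (fst p) \<otimes>\<^bsub>G\<^esub> (iota (snd p) \<otimes>\<^bsub>G\<^esub> prodL L)"

lemma prodL_closed[simp]: "\<forall>p\<in>set L. snd p \<in> carrier B \<Longrightarrow> prodL L \<in> carrier G"
  by (induction L) auto

definition Gam :: "'v nf \<Rightarrow> 'v gword set" where
  "Gam nf = iota (fst nf) \<otimes>\<^bsub>G\<^esub> prodL (snd nf)"

lemma valid_prodL: "valid nf \<Longrightarrow> prodL (snd nf) \<in> carrier G"
  by (simp add: valid_def)

lemma Gam_closed: "valid nf \<Longrightarrow> Gam nf \<in> carrier G"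
  by (simp add: Gam_def valid_def)

lemma Gam_bact: "valid nf \<Longrightarrow> b \<in> carrier B \<Longrightarrow> Gam (bact b nf) = iota b \<otimes>\<^bsub>G\<^esub> Gam nf"
  by (simp add: Gam_def bact_def valid_def G.m_assoc)

lemma Gam_tact: "valid nf \<Longrightarrow> Gam (tact e nf) = tV e \<otimes>\<^bsub>G\<^esub> Gam nf"
proof -
  assume vn: "valid nf"
  obtain b0 L where nf: "nf = (b0, L)" by (cases nf)
  have b0: "b0 \<in> carrier B" and PL: "prodL L \<in> carrier G" using vn nf by (auto simp: valid_def)
  show ?thesis
  proof (cases "e = 0")
    case True then show ?thesis using vn by (simp add: tV_0 Gam_closed)
  next
    case e: False
    show ?thesis
    proof (cases "rB b0 = \<one>\<^bsub>B\<^esub>")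
      case False
      have "iota b0 = iota (pi b0) \<otimes>\<^bsub>G\<^esub> iota (rB b0)"
        using b0 pi_rB_decomp[OF b0] by (metis ioh.hom_mult pi_closed rB_closed)
      then show ?thesis using nf e False b0 PL
        by (simp add: tact_A Gam_def G.m_assoc comm_C')
    next
      case r0: True
      have pb: "pi b0 = b0" using r0 b0 rB_one_iff by blast
      show ?thesis
      proof (cases L)
        case Nil
        then show ?thesis using nf e r0 b0 pb by (simp add: tact_B1 Gam_def comm_C)
      next
        case (Cons p L')
        obtain e' r' where p: "p = (e', r')" by (cases p)
        have r': "r' \<in> carrier B" and PL': "prodL L' \<in> carrier G" using vn nf Cons p by (auto simp: valid_def)
        show ?thesis
        proof (cases "e + e' = 0")
          case True
          then show ?thesis using nf e r0 b0 pb Cons p r' PL'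
            by (simp add: tact_B2 Gam_def comm_C' tV_add' tV_0 G.m_assoc)
        next
          case False
          then show ?thesis using nf e r0 b0 pb Cons p r' PL'
            by (simp add: tact_B2 Gam_def comm_C' tV_add' G.m_assoc)
        qed
      qed
    qed
  qed
qed

lemma Gam_wact: "w \<in> gp_words V \<Longrightarrow> valid nf \<Longrightarrow> Gam (wact w nf) = gp_class V E n w \<otimes>\<^bsub>G\<^esub> Gam nf"
proof (induction w arbitrary: nf)
  case Nil then show ?case by (simp add: gp_one[symmetric] Gam_closed)
next
  case (Cons l w)
  obtain u a where l: "l = (u, a)" by (cases l)
  have uw: "u \<in> V" "w \<in> gp_words V" using Cons.prems l by auto
  have vw: "valid (wact w nf)" using uw Cons.prems wact_valid by blast
  have split: "gp_class V E n (l # w) = gp_class V E n [(u, a)] \<otimes>\<^bsub>G\<^esub> gp_class V E n w"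
    using uw l by (simp add: gp_mult_class)
  have cw: "gp_class V E n w \<in> carrier G" "gp_class V E n [(u, a)] \<in> carrier G"
    using uw by (auto simp: gp_carrier)
  show ?case
  proof (cases "u = v")
    case True
    then show ?thesis using Cons vw l split cw uw Gam_closed[OF Cons.prems(2)]
      by (simp add: lact_def Gam_tact tV_def G.m_assoc)
  next
    case False
    have io: "iota (gp_class (V - {v}) E n [(u, a)]) = gp_class V E n [(u, a)]"
      using uw False by (simp add: iota_class)
    show ?thesis using Cons vw l split cw uw False io letterB[of u a] Gam_closed[OF Cons.prems(2)]
      by (simp add: lact_def Gam_bact G.m_assoc)
  qed
qed

definition nf0 :: "'v nf" where "nf0 = (\<one>\<^bsub>B\<^esub>, [])"

lemma valid_nf0[simp]: "valid nf0" by (simp add: nf0_def valid_def)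

lemma Gam_nf0: "Gam nf0 = \<one>\<^bsub>G\<^esub>"
  by (simp add: nf0_def Gam_def)

lemma Gam_Act: "X \<in> carrier G \<Longrightarrow> Gam (Act X nf0) = X"
proof -
  assume "X \<in> carrier G"
  then obtain w where w: "w \<in> gp_words V" "X = gp_class V E n w" by (auto simp: gp_carrier)
  have "X \<in> carrier G" using w by (simp add: gp_carrier)
  then show ?thesis using w by (simp add: Act_class Gam_wact Gam_nf0)
qed

lemma tact_len: "length (snd (tact e nf)) \<le> Suc (length (snd nf))"
proof -
  obtain b0 L where nf: "nf = (b0, L)" by (cases nf)
  show ?thesis
    by (cases L) (auto simp: nf tact_def split: if_splits)
qed

lemma bact_len: "snd (bact b nf) = snd nf" by (simp add: bact_def)

lemma Act_prodL_Cons: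
  assumes "valid nf" "snd p \<in> carrier B" "\<forall>q\<in>set K. snd q \<in> carrier B"
  shows "Act (prodL (p # K)) nf = tact (fst p) (bact (snd p) (Act (prodL K) nf))"
proof -
  have v1: "valid (Act (prodL K) nf)" using assms by (simp add: Act_valid)
  have "Act (prodL (p # K)) nf = Act (tV (fst p)) (Act (iota (snd p)) (Act (prodL K) nf))"
    using assms v1 by (simp add: Act_mult Act_valid)
  also have "\<dots> = tact (fst p) (bact (snd p) (Act (prodL K) nf))"
    using assms v1 by (simp add: Act_iota Act_tV bact_valid)
  finally show ?thesis .
qed

lemma Act_prodL_len:
  "valid nf \<Longrightarrow> \<forall>q\<in>set K. snd q \<in> carrier B \<Longrightarrow>
   length (snd (Act (prodL K) nf)) \<le> length (snd nf) + length K"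
proof (induction K)
  case Nil then show ?case by (simp add: Act_one)
next
  case (Cons p K)
  have "Act (prodL (p # K)) nf = tact (fst p) (bact (snd p) (Act (prodL K) nf))"
    by (rule Act_prodL_Cons) (use Cons.prems in auto)
  then show ?case using Cons tact_len[of "fst p" "bact (snd p) (Act (prodL K) nf)"]
    by (simp add: bact_len)
qed

lemma Act_prodL_block:
  assumes "\<forall>q\<in>set K. fst q \<noteq> 0 \<and> snd q \<in> carrier B \<and> pi (snd q) \<noteq> snd q"
    and "valid (c, M)" "pi c = c"
  shows "\<exists>c' M'. Act (prodL K) (c, M) = (c', M') \<and> valid (c', M') \<and> pi c' = c' \<and>
           length M' = length M + length K"
  using assms
proof (induction K)
  case Nil then show ?case by (simp add: Act_one)
next
  case (Cons p K)
  obtain e \<sigma> where p: "p = (e, \<sigma>)" by (cases p)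
  have pp: "e \<noteq> 0" "\<sigma> \<in> carrier B" "pi \<sigma> \<noteq> \<sigma>" using Cons.prems p by auto
  obtain c1 M1 where c1: "Act (prodL K) (c, M) = (c1, M1)" "valid (c1, M1)" "pi c1 = c1"
    "length M1 = length M + length K" using Cons by auto
  have c1c: "c1 \<in> carrier B" using c1 by (simp add: valid_def)
  have "pi (\<sigma> \<otimes>\<^bsub>B\<^esub> c1) \<noteq> \<sigma> \<otimes>\<^bsub>B\<^esub> c1"
    using pp c1 c1c by (simp add: B.right_cancel)
  then have r: "rB (\<sigma> \<otimes>\<^bsub>B\<^esub> c1) \<noteq> \<one>\<^bsub>B\<^esub>" using pp c1c by (simp add: rB_one_iff)
  have "Act (prodL (p # K)) (c, M) = tact (fst p) (bact (snd p) (Act (prodL K) (c, M)))"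
    by (rule Act_prodL_Cons) (use Cons.prems in auto)
  then have "Act (prodL (p # K)) (c, M) = tact e (bact \<sigma> (c1, M1))"
    using p c1 by simp
  also have "\<dots> = (pi (\<sigma> \<otimes>\<^bsub>B\<^esub> c1), (e, rB (\<sigma> \<otimes>\<^bsub>B\<^esub> c1)) # M1)"
    using r pp by (simp add: bact_def tact_A)
  finally have eq: "Act (prodL (p # K)) (c, M) = (pi (\<sigma> \<otimes>\<^bsub>B\<^esub> c1), (e, rB (\<sigma> \<otimes>\<^bsub>B\<^esub> c1)) # M1)" .
  have "valid (tact e (bact \<sigma> (c1, M1)))" using c1 pp by (simp add: tact_valid bact_valid)
  then have "valid (pi (\<sigma> \<otimes>\<^bsub>B\<^esub> c1), (e, rB (\<sigma> \<otimes>\<^bsub>B\<^esub> c1)) # M1)"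
    using r pp by (simp add: bact_def tact_A)
  then show ?case using eq c1 c1c pp by simp
qed

lemma Act_prodL_iter:
  assumes "\<forall>q\<in>set K. fst q \<noteq> 0 \<and> snd q \<in> carrier B \<and> pi (snd q) \<noteq> snd q"
  shows "\<exists>c M. (Act (prodL K) ^^ j) nf0 = (c, M) \<and> valid (c, M) \<and> pi c = c \<and> length M = j * length K"
proof (induction j)
  case 0 then show ?case by (simp add: nf0_def valid_def)
next
  case (Suc j)
  then obtain c M where cM: "(Act (prodL K) ^^ j) nf0 = (c, M)" "valid (c, M)" "pi c = c" "length M = j * length K"
    by auto
  show ?case using Act_prodL_block[OF assms cM(2,3)] cM by auto
qed

lemma prodL_append: "\<forall>q\<in>set K1. snd q \<in> carrier B \<Longrightarrow> \<forall>q\<in>set K2. snd q \<in> carrier B \<Longrightarrow>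
   prodL (K1 @ K2) = prodL K1 \<otimes>\<^bsub>G\<^esub> prodL K2"
  by (induction K1) (auto simp: G.m_assoc)

lemma prodL_snoc: "\<forall>q\<in>set K. snd q \<in> carrier B \<Longrightarrow> r \<in> carrier B \<Longrightarrow> x \<in> carrier B \<Longrightarrow>
   prodL (K @ [(e, r)]) \<otimes>\<^bsub>G\<^esub> iota x = prodL (K @ [(e, r \<otimes>\<^bsub>B\<^esub> x)])"
  by (induction K) (auto simp: G.m_assoc)

lemma conj_pow: "X \<in> carrier G \<Longrightarrow> Z \<in> carrier G \<Longrightarrow>
   (inv\<^bsub>G\<^esub> Z \<otimes>\<^bsub>G\<^esub> X \<otimes>\<^bsub>G\<^esub> Z) [^]\<^bsub>G\<^esub> (k::nat) = inv\<^bsub>G\<^esub> Z \<otimes>\<^bsub>G\<^esub> X [^]\<^bsub>G\<^esub> k \<otimes>\<^bsub>G\<^esub> Z"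
proof (induction k)
  case 0 then show ?case by simp
next
  case (Suc k)
  have h: "Z \<otimes>\<^bsub>G\<^esub> (inv\<^bsub>G\<^esub> Z \<otimes>\<^bsub>G\<^esub> Y) = Y" if "Y \<in> carrier G" for Y
    using that Suc.prems by (simp add: G.m_assoc[symmetric])
  show ?case using Suc by (simp add: G.m_assoc h)
qed

lemma conj_one: "X \<in> carrier G \<Longrightarrow> Z \<in> carrier G \<Longrightarrow>
   inv\<^bsub>G\<^esub> Z \<otimes>\<^bsub>G\<^esub> X \<otimes>\<^bsub>G\<^esub> Z = \<one>\<^bsub>G\<^esub> \<Longrightarrow> X = \<one>\<^bsub>G\<^esub>"
  by (metis G.inv_closed G.m_closed G.inv_solve_right G.l_one G.inv_inv G.r_inv G.inv_solve_left)

theorem tf_G: "torsion_free G"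
proof -
  have main: "\<forall>X\<in>carrier G. length (snd (Act X nf0)) = m \<longrightarrow>
      (\<exists>k>0. X [^]\<^bsub>G\<^esub> (k::nat) = \<one>\<^bsub>G\<^esub>) \<longrightarrow> X = \<one>\<^bsub>G\<^esub>" for m
  proof (induction m rule: less_induct)
    case (less m)
    show ?case
    proof (intro ballI impI)
      fix X assume X: "X \<in> carrier G" and len: "length (snd (Act X nf0)) = m"
        and tor: "\<exists>k>0. X [^]\<^bsub>G\<^esub> (k::nat) = \<one>\<^bsub>G\<^esub>"
      then obtain k :: nat where k: "0 < k" "X [^]\<^bsub>G\<^esub> k = \<one>\<^bsub>G\<^esub>" by auto
      obtain b0 L where bL: "Act X nf0 = (b0, L)" by (cases "Act X nf0")
      have vbL: "valid (b0, L)" using Act_valid[OF X valid_nf0] bL by simp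
      have b0: "b0 \<in> carrier B" using vbL by (simp add: valid_def)
      have LB: "\<forall>q\<in>set L. snd q \<in> carrier B" using vbL by (simp add: valid_def)
      have Xeq: "X = iota b0 \<otimes>\<^bsub>G\<^esub> prodL L" using Gam_Act[OF X] bL by (simp add: Gam_def)
      show "X = \<one>\<^bsub>G\<^esub>"
      proof (cases "L = []")
        case True
        then have Xb: "X = iota b0" using Xeq b0 by simp
        have "X [^]\<^bsub>G\<^esub> k = iota (b0 [^]\<^bsub>B\<^esub> k)" using Xb b0 by (simp add: ioh.hom_nat_pow)
        then have "Act (iota (b0 [^]\<^bsub>B\<^esub> k)) nf0 = nf0" using k Act_one by simp
        moreover have "Act (iota (b0 [^]\<^bsub>B\<^esub> k)) nf0 = bact (b0 [^]\<^bsub>B\<^esub> k) nf0"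
          using b0 by (intro Act_iota) simp_all
        moreover have "bact (b0 [^]\<^bsub>B\<^esub> k) nf0 = (b0 [^]\<^bsub>B\<^esub> k, [])"
          using b0 by (simp add: bact_def nf0_def)
        ultimately have "b0 [^]\<^bsub>B\<^esub> k = \<one>\<^bsub>B\<^esub>" by (simp add: nf0_def)
        then have "b0 = \<one>\<^bsub>B\<^esub>" using IH b0 k by (auto simp: torsion_free_def)
        then show ?thesis using Xb by simp
      next
        case False
        then obtain L1 em rm where L: "L = L1 @ [(em, rm)]" by (metis rev_exhaust surj_pair)
        have L1B: "\<forall>q\<in>set L1. snd q \<in> carrier B \<and> fst q \<noteq> 0 \<and> pi (snd q) = \<one>\<^bsub>B\<^esub> \<and> snd q \<noteq> \<one>\<^bsub>B\<^esub>"
          using vbL L by (auto simp: valid_def)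
        have rm: "rm \<in> carrier B" "em \<noteq> 0" "pi rm = \<one>\<^bsub>B\<^esub>" using vbL L by (auto simp: valid_def)
        define s where "s = rm \<otimes>\<^bsub>B\<^esub> b0"
        have sB: "s \<in> carrier B" using rm b0 by (simp add: s_def)
        define Y where "Y = prodL (L1 @ [(em, s)])"
        have L1B': "\<forall>q\<in>set L1. snd q \<in> carrier B" using L1B by auto
        have PL: "prodL L \<in> carrier G" using LB by simp
        have Yc: "Y \<in> carrier G" using L1B' sB by (simp add: Y_def)
        have io: "iota b0 \<in> carrier G" using b0 by simp
        have YX: "Y = inv\<^bsub>G\<^esub> (iota b0) \<otimes>\<^bsub>G\<^esub> X \<otimes>\<^bsub>G\<^esub> iota b0"
        proof -
          have "inv\<^bsub>G\<^esub> (iota b0) \<otimes>\<^bsub>G\<^esub> X \<otimes>\<^bsub>G\<^esub> iota b0 = prodL L \<otimes>\<^bsub>G\<^esub> iota b0"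
            using Xeq io PL by (simp add: G.m_assoc[symmetric])
          also have "\<dots> = Y" unfolding L Y_def s_def using prodL_snoc[OF L1B' rm(1) b0] .
          finally show ?thesis by simp
        qed
        have Ytor: "Y [^]\<^bsub>G\<^esub> k = \<one>\<^bsub>G\<^esub>" using YX conj_pow[OF X io, of k] k io by simp
        have Y1: "Y = \<one>\<^bsub>G\<^esub> \<Longrightarrow> X = \<one>\<^bsub>G\<^esub>" using YX conj_one[OF X io] by simp
        have iterY: "(Act Y ^^ k) nf0 = nf0" using Act_pow[OF Yc valid_nf0, of k] Ytor Act_one by simp
        show ?thesis
        proof (cases "pi s = s")
          case False
          have cond: "\<forall>q\<in>set (L1 @ [(em, s)]). fst q \<noteq> 0 \<and> snd q \<in> carrier B \<and> pi (snd q) \<noteq> snd q"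
            using L1B rm sB False by force
          obtain c M where cM: "(Act Y ^^ k) nf0 = (c, M)" "length M = k * length (L1 @ [(em, s)])"
            using Act_prodL_iter[OF cond, of k] by (auto simp: Y_def)
          then have "M = []" using iterY by (simp add: nf0_def)
          then show ?thesis using cM k by simp
        next
          case True
          show ?thesis
          proof (cases L1)
            case Nil
            have ActY: "Act Y nf = tact em (bact s nf)" if "valid nf" for nf
            proof -
              have "Act (prodL [(em, s)]) nf = tact (fst (em, s)) (bact (snd (em, s)) (Act (prodL []) nf))"
                by (rule Act_prodL_Cons) (use that sB in auto)
              then show ?thesis using that Nil by (simp add: Act_one Y_def)
            qed
            have rs: "rB s = \<one>\<^bsub>B\<^esub>" using True sB by (simp add: rB_one_iff)
            have it: "\<exists>c. (Act Y ^^ Suc j) nf0 = (c, [(int (Suc j) * em, \<one>\<^bsub>B\<^esub>)]) \<and> c \<in> carrier B \<and> pi c = c" for j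
            proof (induction j)
              case 0
              have "(Act Y ^^ Suc 0) nf0 = (s, [(em, \<one>\<^bsub>B\<^esub>)])"
                using ActY[OF valid_nf0] sB rs rm by (simp add: nf0_def bact_def tact_B1)
              then show ?case using sB True by simp
            next
              case (Suc j)
              then obtain c where c: "(Act Y ^^ Suc j) nf0 = (c, [(int (Suc j) * em, \<one>\<^bsub>B\<^esub>)])"
                "c \<in> carrier B" "pi c = c" by auto
              have vc: "valid (c, [(int (Suc j) * em, \<one>\<^bsub>B\<^esub>)])" using c rm by (simp add: valid_def)
              have psc: "pi (s \<otimes>\<^bsub>B\<^esub> c) = s \<otimes>\<^bsub>B\<^esub> c" using True c sB by simp
              have rsc: "rB (s \<otimes>\<^bsub>B\<^esub> c) = \<one>\<^bsub>B\<^esub>" using psc c sB by (simp add: rB_one_iff)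
              have ne: "em + int (Suc j) * em \<noteq> 0"
              proof -
                have "em + int (Suc j) * em = int (Suc (Suc j)) * em" by (simp add: algebra_simps)
                then show ?thesis using rm by simp
              qed
              have eq: "em + int (Suc j) * em = int (Suc (Suc j)) * em" by (simp add: algebra_simps)
              have "(Act Y ^^ Suc (Suc j)) nf0 = (s \<otimes>\<^bsub>B\<^esub> c, [(int (Suc (Suc j)) * em, \<one>\<^bsub>B\<^esub>)])"
                using ActY[OF vc] c rm rsc ne eq by (simp add: bact_def tact_B2 del: of_nat_Suc)
              then show ?case using psc c sB by auto
            qed
            obtain j where kj: "k = Suc j" using k by (cases k) auto
            then show ?thesis using it[of j] iterY by (auto simp: nf0_def)
          next
            case (Cons p M)
            obtain e1 r1 where p: "p = (e1, r1)" by (cases p)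
            have r1: "r1 \<in> carrier B" and MB: "\<forall>q\<in>set M. snd q \<in> carrier B"
              using L1B Cons p by auto
            have PM: "prodL M \<in> carrier G" using MB by simp
            have iosc: "iota s \<in> carrier G" "iota r1 \<in> carrier G" using sB r1 by auto
            define Z where "Z = inv\<^bsub>G\<^esub> (tV em)"
            have Zc: "Z \<in> carrier G" by (simp add: Z_def)
            define Y2 where "Y2 = inv\<^bsub>G\<^esub> Z \<otimes>\<^bsub>G\<^esub> Y \<otimes>\<^bsub>G\<^esub> Z"
            have Y2c: "Y2 \<in> carrier G" using Zc Yc by (simp add: Y2_def)
            have Yform: "Y = tV e1 \<otimes>\<^bsub>G\<^esub> (iota r1 \<otimes>\<^bsub>G\<^esub> (prodL M \<otimes>\<^bsub>G\<^esub> (iota s \<otimes>\<^bsub>G\<^esub> tV em)))"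
            proof -
              have "Y = tV e1 \<otimes>\<^bsub>G\<^esub> (iota r1 \<otimes>\<^bsub>G\<^esub> (prodL M \<otimes>\<^bsub>G\<^esub> prodL [(em, s)]))"
                using Cons p MB sB by (simp add: Y_def prodL_append)
              also have "prodL [(em, s)] = iota s \<otimes>\<^bsub>G\<^esub> tV em"
                using comm_C[OF sB True, of em] sB by simp
              finally show ?thesis .
            qed
            have Y2eq: "Y2 = prodL ((em + e1, r1) # M) \<otimes>\<^bsub>G\<^esub> iota s"
              using Yform PM iosc by (simp add: Y2_def Z_def G.m_assoc tV_add')
            have Y2tor: "Y2 [^]\<^bsub>G\<^esub> k = \<one>\<^bsub>G\<^esub>"
              using conj_pow[OF Yc Zc, of k] Ytor Zc by (simp add: Y2_def)
            have "Act Y2 nf0 = Act (prodL ((em + e1, r1) # M)) (Act (iota s) nf0)"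
              using Y2eq r1 MB sB by (simp add: Act_mult)
            also have "Act (iota s) nf0 = (s, [])" using sB Act_iota[OF sB valid_nf0] by (simp add: bact_def nf0_def)
            finally have "Act Y2 nf0 = Act (prodL ((em + e1, r1) # M)) (s, [])" .
            then have "length (snd (Act Y2 nf0)) \<le> length (snd (s, [] :: (int \<times> 'v gword set) list)) + length ((em + e1, r1) # M)"
              using Act_prodL_len[of "(s, [])" "(em + e1, r1) # M"] sB r1 MB by (simp add: valid_def)
            then have "length (snd (Act Y2 nf0)) < m"
              using len bL L Cons by simp
            then have "Y2 = \<one>\<^bsub>G\<^esub>" using less.IH Y2c Y2tor k by blast
            then have "Y = \<one>\<^bsub>G\<^esub>" using conj_one[OF Yc Zc] by (simp add: Y2_def)
            then show ?thesis by (rule Y1)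
          qed
        qed
      qed
    qed
  qed
  show ?thesis unfolding torsion_free_def using main by blast
qed

end


lemma raag_torsion_free: "finite V \<Longrightarrow> \<forall>u\<in>V. n u = 0 \<Longrightarrow> torsion_free (graph_product V E n)"
proof (induction V rule: finite_induct)
  case empty
  have "gp_words ({} :: 'a set) = {[]}" by (auto simp: gp_words_def)
  then show ?case by (auto simp: torsion_free_def gp_carrier gp_one)
next
  case (insert v F)
  have F: "insert v F - {v} = F" using insert by auto
  interpret hnn "insert v F" E n v
    by unfold_locales (use insert F in auto)
  show ?case by (rule tf_G)
qed

lemma retr_A_ghom: "retr_A V E n = ghom (inf_vertices V n) E n (filter (\<lambda>l. n (fst l) = 0))"
  by (rule ext) (simp add: retr_A_def ghom_def)

lemma retr_hom: "retr_A V E n \<in> hom (graph_product V E n) (graph_product (inf_vertices V n) E n)"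
  unfolding retr_A_ghom
  by (rule ghom_hom) (auto intro: gp_rel_filter simp: inf_vertices_def)

lemma retr_class: "w \<in> gp_words V \<Longrightarrow>
    retr_A V E n (gp_class V E n w) = gp_class (inf_vertices V n) E n (filter (\<lambda>l. n (fst l) = 0) w)"
  unfolding retr_A_ghom
  by (rule ghom_class) (auto intro: gp_rel_filter simp: inf_vertices_def)

lemma inf_sub: "inf_vertices V n \<subseteq> V" by (auto simp: inf_vertices_def)

lemma incl_hom: "ghom V E n id \<in> hom (graph_product (inf_vertices V n) E n) (graph_product V E n)"
  by (rule ghom_hom) (auto intro: gp_rel_mono[OF _ inf_sub])

lemma incl_class: "w \<in> gp_words (inf_vertices V n) \<Longrightarrow>
    ghom V E n id (gp_class (inf_vertices V n) E n w) = gp_class V E n w"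
proof -
  assume w: "w \<in> gp_words (inf_vertices V n)"
  have "ghom V E n id (gp_class (inf_vertices V n) E n w) = gp_class V E n (id w)"
    by (rule ghom_class[of "inf_vertices V n" E n V id]) (use w gp_rel_mono[OF _ inf_sub] in auto)
  then show ?thesis by simp
qed

lemma retr_incl: "x \<in> carrier (graph_product (inf_vertices V n) E n) \<Longrightarrow> retr_A V E n (ghom V E n id x) = x"
proof -
  assume "x \<in> carrier (graph_product (inf_vertices V n) E n)"
  then obtain w where w: "w \<in> gp_words (inf_vertices V n)" "x = gp_class (inf_vertices V n) E n w"
    by (auto simp: gp_carrier)
  have wV: "w \<in> gp_words V" using w(1) inf_sub[of V n] by (auto simp: gp_words_def)
  have "filter (\<lambda>l. n (fst l) = 0) w = w" using w(1)
    by (auto simp: gp_words_def inf_vertices_def intro!: filter_True)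
  then show ?thesis using w wV by (simp add: incl_class retr_class)
qed

lemma incl_gen: "u \<in> inf_vertices V n \<Longrightarrow> ghom V E n id (gp_gen (inf_vertices V n) E n u) = gp_gen V E n u"
  by (simp add: gp_gen_def incl_class)

lemma retr_gen_inf: "u \<in> V \<Longrightarrow> n u = 0 \<Longrightarrow> retr_A V E n (gp_gen V E n u) = gp_gen (inf_vertices V n) E n u"
  by (simp add: gp_gen_def retr_class)

lemma retr_gen_fin: "u \<in> V \<Longrightarrow> n u \<noteq> 0 \<Longrightarrow> retr_A V E n (gp_gen V E n u) = \<one>\<^bsub>graph_product (inf_vertices V n) E n\<^esub>"
  by (simp add: gp_gen_def retr_class gp_one)

lemma key:
  fixes VG :: "'a set" and VS :: "'b set"
  assumes fin: "finite VG"
    and chi: "\<chi> \<in> hom (graph_product VS ES nS) (graph_product VG EG nG)"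
    and x: "x \<in> carrier (graph_product VS ES nS)"
  shows "retr_A VG EG nG (\<chi> (ghom VS ES nS id (retr_A VS ES nS x))) = retr_A VG EG nG (\<chi> x)"
proof -
  let ?WS = "graph_product VS ES nS" and ?WSA = "graph_product (inf_vertices VS nS) ES nS"
  let ?WG = "graph_product VG EG nG" and ?WGA = "graph_product (inf_vertices VG nG) EG nG"
  have gWS: "group ?WS" and gWSA: "group ?WSA" and gWG: "group ?WG" and gWGA: "group ?WGA"
    by (rule gp_group)+
  have h2: "retr_A VG EG nG \<circ> \<chi> \<in> hom ?WS ?WGA" by (rule hom_compose[OF chi retr_hom])
  have h1: "retr_A VG EG nG \<circ> \<chi> \<circ> ghom VS ES nS id \<circ> retr_A VS ES nS \<in> hom ?WS ?WGA"
    by (rule hom_compose[OF retr_hom], rule hom_compose[OF incl_hom h2])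
  have tf: "torsion_free ?WGA" by (rule raag_torsion_free) (use fin in \<open>auto simp: inf_vertices_def\<close>)
  have "(retr_A VG EG nG \<circ> \<chi> \<circ> ghom VS ES nS id \<circ> retr_A VS ES nS) x = (retr_A VG EG nG \<circ> \<chi>) x"
  proof (rule hom_gen_eq[OF h1 h2 gWGA _ x])
    fix u assume u: "u \<in> VS"
    have gc: "gp_gen VS ES nS u \<in> carrier ?WS" using u by (auto simp: gp_gen_def gp_carrier)
    show "(retr_A VG EG nG \<circ> \<chi> \<circ> ghom VS ES nS id \<circ> retr_A VS ES nS) (gp_gen VS ES nS u) =
          (retr_A VG EG nG \<circ> \<chi>) (gp_gen VS ES nS u)"
    proof (cases "nS u = 0")
      case True
      have "u \<in> inf_vertices VS nS" using u True by (simp add: inf_vertices_def)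
      then show ?thesis using u True by (simp add: retr_gen_inf incl_gen)
    next
      case False
      have "(retr_A VG EG nG \<circ> \<chi> \<circ> ghom VS ES nS id) \<in> hom ?WSA ?WGA"
        using hom_compose[OF incl_hom h2] by (simp add: comp_assoc)
      then have lhs: "(retr_A VG EG nG \<circ> \<chi> \<circ> ghom VS ES nS id \<circ> retr_A VS ES nS) (gp_gen VS ES nS u) = \<one>\<^bsub>?WGA\<^esub>"
        using retr_gen_fin[of u VS nS ES, OF u False] hom_one[OF _ gWSA gWGA] by simp
      let ?y = "(retr_A VG EG nG \<circ> \<chi>) (gp_gen VS ES nS u)"
      have yc: "?y \<in> carrier ?WGA" using h2 gc by (rule hom_in_carrier)
      have "?y [^]\<^bsub>?WGA\<^esub> nS u = (retr_A VG EG nG \<circ> \<chi>) (gp_gen VS ES nS u [^]\<^bsub>?WS\<^esub> nS u)"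
        using hom_nat_pow[OF h2 gc gWS gWGA] by simp
      also have "\<dots> = \<one>\<^bsub>?WGA\<^esub>" using gen_torsion[OF u] hom_one[OF h2 gWS gWGA] by simp
      finally have "?y = \<one>\<^bsub>?WGA\<^esub>" using tf yc False unfolding torsion_free_def by blast
      then show ?thesis using lhs by simp
    qed
  qed
  then show ?thesis by simp
qed

theorem lemma5p1:
  fixes VG :: "'a set" and EG :: "'a \<Rightarrow> 'a \<Rightarrow> bool" and nG :: "'a \<Rightarrow> nat"
    and VS :: "'b set" and ES :: "'b \<Rightarrow> 'b \<Rightarrow> bool" and nS :: "'b \<Rightarrow> nat"
    and \<phi> :: "'a gword set \<Rightarrow> 'b gword set"
  assumes "labeled_cyclic_graph VG EG nG"
    and "labeled_cyclic_graph VS ES nS"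
    and "\<phi> \<in> iso (graph_product VG EG nG) (graph_product VS ES nS)"
  shows "\<exists>\<psi>. \<psi> \<in> iso (graph_product (inf_vertices VG nG) EG nG)
                   (graph_product (inf_vertices VS nS) ES nS) \<and>
             (\<forall>v \<in> inf_vertices VG nG.
                \<psi> (gp_gen (inf_vertices VG nG) EG nG v) = retr_A VS ES nS (\<phi> (gp_gen VG EG nG v)))"
proof -
  let ?WS = "graph_product VS ES nS" and ?WSA = "graph_product (inf_vertices VS nS) ES nS"
  let ?WG = "graph_product VG EG nG" and ?WGA = "graph_product (inf_vertices VG nG) EG nG"
  have finG: "finite VG" and finS: "finite VS" using assms(1,2) by (auto simp: labeled_cyclic_graph_def)
  have gWG: "group ?WG" by (rule gp_group)
  obtain \<chi> where iso: "group_isomorphisms ?WG ?WS \<phi> \<chi>"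
    using group.iso_iff_group_isomorphisms[OF gWG] assms(3) by blast
  then have phi: "\<phi> \<in> hom ?WG ?WS" and chi: "\<chi> \<in> hom ?WS ?WG"
    and chiphi: "\<And>x. x \<in> carrier ?WG \<Longrightarrow> \<chi> (\<phi> x) = x"
    and phichi: "\<And>y. y \<in> carrier ?WS \<Longrightarrow> \<phi> (\<chi> y) = y"
    by (auto simp: group_isomorphisms_def)
  define \<psi> where "\<psi> = retr_A VS ES nS \<circ> \<phi> \<circ> ghom VG EG nG id"
  define \<psi>' where "\<psi>' = retr_A VG EG nG \<circ> \<chi> \<circ> ghom VS ES nS id"
  have hpsi: "\<psi> \<in> hom ?WGA ?WSA" unfolding \<psi>_def
    by (rule hom_compose[OF incl_hom], rule hom_compose[OF phi retr_hom])
  have hpsi': "\<psi>' \<in> hom ?WSA ?WGA" unfolding \<psi>'_def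
    by (rule hom_compose[OF incl_hom], rule hom_compose[OF chi retr_hom])
  have "group_isomorphisms ?WGA ?WSA \<psi> \<psi>'"
    unfolding group_isomorphisms_def
  proof (intro conjI ballI hpsi hpsi')
    fix z assume z: "z \<in> carrier ?WGA"
    have iz: "ghom VG EG nG id z \<in> carrier ?WG" using incl_hom z by (rule hom_in_carrier)
    have pz: "\<phi> (ghom VG EG nG id z) \<in> carrier ?WS" using phi iz by (rule hom_in_carrier)
    show "\<psi>' (\<psi> z) = z"
      using key[OF finG chi pz] chiphi[OF iz] retr_incl[OF z] by (simp add: \<psi>_def \<psi>'_def)
  next
    fix y assume y: "y \<in> carrier ?WSA"
    have iy: "ghom VS ES nS id y \<in> carrier ?WS" using incl_hom y by (rule hom_in_carrier)
    have cy: "\<chi> (ghom VS ES nS id y) \<in> carrier ?WG" using chi iy by (rule hom_in_carrier)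
    show "\<psi> (\<psi>' y) = y"
      using key[OF finS phi cy] phichi[OF iy] retr_incl[OF y] by (simp add: \<psi>_def \<psi>'_def)
  qed
  then have "\<psi> \<in> iso ?WGA ?WSA" by (rule group_isomorphisms_imp_iso)
  moreover have "\<forall>v \<in> inf_vertices VG nG.
                \<psi> (gp_gen (inf_vertices VG nG) EG nG v) = retr_A VS ES nS (\<phi> (gp_gen VG EG nG v))"
    by (simp add: \<psi>_def incl_gen)
  ultimately show ?thesis by blast
qed

end
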